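(* Let $K$ be a field, $X$ a finite connected poset, $\varphi$ a Lie automorphism of $I(X,K)$, and $e_{xy}\in L_i$ with $i>0$. Let $u<v$ and $k\in K^*$ be such that $\widetilde\varphi(e_{xy})=k\,e_{uv}$. Then $\varphi(e_{xy})-\widetilde\varphi(e_{xy})\in\langle e_{uv}\rangle\cap J_{i+1}$.
   Context: $I(X,K)$ is the incidence algebra: functions $f:X\times X\to K$ with $f(x,y)=0$ unless $x\le y$, product $(fg)(x,y)=\sum_{x\le t\le y}f(x,t)g(t,y)$; $e_{xy}$ ($x\le y$) is the basis element equal to $1$ at $(x,y)$ and $0$ elsewhere; $\langle e_{uv}\rangle$ is the two-sided ideal generated by $e_{uv}$. A Lie automorphism is a bijective linear map preserving $[f,g]=fg-gf$. Let $l(\lfloor x,y\rfloor)$ be the maximum length of a chain in $\{z:x\le z\le y\}$; $L_i=\mathrm{span}_K\{e_{xy}: l(\lfloor x,y\rfloor)=i\}$ and $J_i=\mathrm{span}_K\{e_{xy}: l(\lfloor x,y\rfloor)\ge i\}$ ($i\ge0$). $\widetilde\varphi$ is the linear map sending $e_{xy}\in L_i$ to the $L_i$-component of $\varphi(e_{xy})$ in $I(X,K)=\bigoplus_iL_i$; for $i>0$ it is known that $\widetilde\varphi(e_{xy})$ is a nonzero multiple of some $e_{uv}$ with $u<v$. Connected means any two elements are joined by a sequence in which consecutive elements are in a covering relation. *)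

theory Defs
  imports Main "HOL-Library.Function_Algebras"
begin

text \<open>Incidence algebra I(X,K) of a finite poset X (a finite ordered type 'x)
  over a field K: functions vanishing off the order relation.\<close>

definition incalg :: "('x::{finite,order} \<Rightarrow> 'x \<Rightarrow> 'k::field) set" where
  "incalg = {f. \<forall>a b. \<not> a \<le> b \<longrightarrow> f a b = 0}"

definition incmul :: "('x::{finite,order} \<Rightarrow> 'x \<Rightarrow> 'k::field) \<Rightarrow> ('x \<Rightarrow> 'x \<Rightarrow> 'k) \<Rightarrow> ('x \<Rightarrow> 'x \<Rightarrow> 'k)" where
  "incmul f g = (\<lambda>a b. \<Sum>t\<in>{t. a \<le> t \<and> t \<le> b}. f a t * g t b)"

definition incsmult :: "'k::field \<Rightarrow> ('x \<Rightarrow> 'x \<Rightarrow> 'k) \<Rightarrow> ('x \<Rightarrow> 'x \<Rightarrow> 'k)" where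
  "incsmult c f = (\<lambda>a b. c * f a b)"

definition lie_bracket :: "('x::{finite,order} \<Rightarrow> 'x \<Rightarrow> 'k::field) \<Rightarrow> ('x \<Rightarrow> 'x \<Rightarrow> 'k) \<Rightarrow> ('x \<Rightarrow> 'x \<Rightarrow> 'k)" where
  "lie_bracket f g = incmul f g - incmul g f"

definition ebas :: "'x \<Rightarrow> 'x \<Rightarrow> ('x \<Rightarrow> 'x \<Rightarrow> 'k::field)" where
  "ebas x y = (\<lambda>a b. if a = x \<and> b = y then 1 else 0)"

definition lie_automorphism :: "(('x::{finite,order} \<Rightarrow> 'x \<Rightarrow> 'k::field) \<Rightarrow> ('x \<Rightarrow> 'x \<Rightarrow> 'k)) \<Rightarrow> bool" where
  "lie_automorphism \<phi> \<longleftrightarrow>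
     bij_betw \<phi> incalg incalg \<and>
     (\<forall>f\<in>incalg. \<forall>g\<in>incalg. \<phi> (f + g) = \<phi> f + \<phi> g) \<and>
     (\<forall>c. \<forall>f\<in>incalg. \<phi> (incsmult c f) = incsmult c (\<phi> f)) \<and>
     (\<forall>f\<in>incalg. \<forall>g\<in>incalg. \<phi> (lie_bracket f g) = lie_bracket (\<phi> f) (\<phi> g))"

definition covers :: "'x::order \<Rightarrow> 'x \<Rightarrow> bool" where
  "covers a b \<longleftrightarrow> a < b \<and> \<not> (\<exists>z. a < z \<and> z < b)"

definition connected_poset :: "'x::order itself \<Rightarrow> bool" where
  "connected_poset _ \<longleftrightarrow> (\<forall>a b::'x. (\<lambda>p q. covers p q \<or> covers q p)\<^sup>*\<^sup>* a b)"

definition ilen :: "'x::{finite,order} \<Rightarrow> 'x \<Rightarrow> nat" where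
  "ilen x y = Max {card C - 1 | C. C \<subseteq> {x..y} \<and> C \<noteq> {} \<and> (\<forall>a\<in>C. \<forall>b\<in>C. a \<le> b \<or> b \<le> a)}"

definition Lcomp :: "nat \<Rightarrow> ('x::{finite,order} \<Rightarrow> 'x \<Rightarrow> 'k::field) \<Rightarrow> ('x \<Rightarrow> 'x \<Rightarrow> 'k)" where
  "Lcomp i f = (\<lambda>a b. if a \<le> b \<and> ilen a b = i then f a b else 0)"

text \<open>J_i = span of e_ab with l([a,b]) \<ge> i.\<close>
definition Jsp :: "nat \<Rightarrow> ('x::{finite,order} \<Rightarrow> 'x \<Rightarrow> 'k::field) set" where
  "Jsp i = {f \<in> incalg. \<forall>a b. f a b \<noteq> 0 \<longrightarrow> ilen a b \<ge> i}"

definition is_ideal :: "('x::{finite,order} \<Rightarrow> 'x \<Rightarrow> 'k::field) set \<Rightarrow> bool" where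
  "is_ideal S \<longleftrightarrow> S \<subseteq> incalg \<and> 0 \<in> S \<and>
     (\<forall>f\<in>S. \<forall>g\<in>S. f + g \<in> S) \<and>
     (\<forall>c. \<forall>f\<in>S. incsmult c f \<in> S) \<and>
     (\<forall>r\<in>incalg. \<forall>s\<in>S. incmul r s \<in> S \<and> incmul s r \<in> S)"

definition ideal_gen :: "('x::{finite,order} \<Rightarrow> 'x \<Rightarrow> 'k::field) \<Rightarrow> ('x \<Rightarrow> 'x \<Rightarrow> 'k) set" where
  "ideal_gen g = \<Inter>{S. is_ideal S \<and> g \<in> S}"

end

theory Submission
  imports Defs
begin

lemma sum_fun_apply2:
  fixes F :: "'p \<Rightarrow> 'a \<Rightarrow> 'b \<Rightarrow> 'c::comm_monoid_add"
  shows "(\<Sum>p\<in>P. F p) a b = (\<Sum>p\<in>P. F p a b)"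
  by (induction P rule: infinite_finite_induct) auto

lemma chain_least:
  fixes C :: "'x::order set"
  assumes "finite C" "C \<noteq> {}" "\<forall>a\<in>C. \<forall>b\<in>C. a \<le> b \<or> b \<le> a"
  shows "\<exists>m\<in>C. \<forall>b\<in>C. m \<le> b"
  using assms
proof (induction C rule: finite_ne_induct)
  case (singleton x) then show ?case by auto
next
  case (insert x F)
  then obtain m where m: "m \<in> F" "\<forall>b\<in>F. m \<le> b" by auto
  show ?case
  proof (cases "x \<le> m")
    case True then show ?thesis using m by (auto intro: order_trans)
  next
    case False
    then have "m \<le> x" using insert.prems m(1) by auto
    then show ?thesis using m by auto
  qed
qed

definition chset :: "'x::{finite,order} \<Rightarrow> 'x \<Rightarrow> 'x set set" where
  "chset a c = {C. C \<subseteq> {a..c} \<and> C \<noteq> {} \<and> (\<forall>p\<in>C. \<forall>q\<in>C. p \<le> q \<or> q \<le> p)}"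

lemma ilen_eq: "ilen a c = Max ((\<lambda>C. card C - 1) ` chset a c)"
  unfolding ilen_def chset_def by (rule arg_cong[where f=Max]) auto

lemma ilen_ge:
  fixes a c :: "'x::{finite,order}"
  assumes "C \<subseteq> {a..c}" "C \<noteq> {}" "\<forall>p\<in>C. \<forall>q\<in>C. p \<le> q \<or> q \<le> p"
  shows "card C - 1 \<le> ilen a c"
  unfolding ilen_eq by (rule Max_ge) (use assms in \<open>auto simp: chset_def\<close>)

lemma ilen_att:
  fixes a c :: "'x::{finite,order}"
  assumes "a \<le> c"
  shows "\<exists>C. C \<subseteq> {a..c} \<and> C \<noteq> {} \<and> (\<forall>p\<in>C. \<forall>q\<in>C. p \<le> q \<or> q \<le> p) \<and> ilen a c = card C - 1"
proof -
  have "{a} \<in> chset a c" using assms by (auto simp: chset_def)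
  then have "ilen a c \<in> (\<lambda>C. card C - 1) ` chset a c"
    unfolding ilen_eq by (intro Max_in) auto
  then show ?thesis by (auto simp: chset_def)
qed

lemma ilen_refl: "ilen (t::'x::{finite,order}) t = 0"
proof -
  obtain C where C: "C \<subseteq> {t..t}" "ilen t t = card C - 1" using ilen_att[of t t] by auto
  have "C \<subseteq> {t}" using C(1) by auto
  then have "card C \<le> 1" using card_mono[of "{t}" C] by auto
  then show ?thesis using C by auto
qed

lemma ilen_lt: "(a::'x::{finite,order}) < b \<Longrightarrow> 1 \<le> ilen a b"
  using ilen_ge[of "{a,b}" a b] by auto

lemma ilen_left:
  fixes a b c :: "'x::{finite,order}"
  assumes "a < b" "b \<le> c"
  shows "ilen b c + 1 \<le> ilen a c"
proof -
  obtain C where C: "C \<subseteq> {b..c}" "C \<noteq> {}" "\<forall>p\<in>C. \<forall>q\<in>C. p \<le> q \<or> q \<le> p" "ilen b c = card C - 1"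
    using ilen_att[OF assms(2)] by auto
  have fin: "finite C" by simp
  have an: "a \<notin> C" using C(1) assms by (auto dest!: subsetD)
  have bd: "\<forall>q\<in>C. b \<le> q \<and> q \<le> c" using C(1) by auto
  have "card (insert a C) - 1 \<le> ilen a c"
    apply (rule ilen_ge)
    using C(2,3) assms bd by (auto intro: order_trans less_imp_le dest: order.strict_trans2)
  moreover have "card C \<ge> 1" using C(2) fin by (simp add: Suc_leI card_gt_0_iff)
  ultimately show ?thesis using C(4) an fin by auto
qed

lemma ilen_right:
  fixes a b c :: "'x::{finite,order}"
  assumes "a \<le> b" "b < c"
  shows "ilen a b + 1 \<le> ilen a c"
proof -
  obtain C where C: "C \<subseteq> {a..b}" "C \<noteq> {}" "\<forall>p\<in>C. \<forall>q\<in>C. p \<le> q \<or> q \<le> p" "ilen a b = card C - 1"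
    using ilen_att[OF assms(1)] by auto
  have fin: "finite C" by simp
  have an: "c \<notin> C" using C(1) assms by (auto dest!: subsetD)
  have bd: "\<forall>q\<in>C. a \<le> q \<and> q \<le> b" using C(1) by auto
  have "card (insert c C) - 1 \<le> ilen a c"
    apply (rule ilen_ge)
    using C(2,3) assms bd by (auto intro: order_trans less_imp_le dest: order.strict_trans1)
  moreover have "card C \<ge> 1" using C(2) fin by (simp add: Suc_leI card_gt_0_iff)
  ultimately show ?thesis using C(4) an fin by auto
qed

lemma ilen_mono:
  fixes p x y q :: "'x::{finite,order}"
  assumes "p \<le> x" "x \<le> y" "y \<le> q"
  shows "ilen x y \<le> ilen p q"
proof -
  obtain C where C: "C \<subseteq> {x..y}" "C \<noteq> {}" "\<forall>p\<in>C. \<forall>q\<in>C. p \<le> q \<or> q \<le> p" "ilen x y = card C - 1"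
    using ilen_att[OF assms(2)] by auto
  have "card C - 1 \<le> ilen p q"
    apply (rule ilen_ge) using C assms by (auto dest!: subsetD intro: order_trans)
  then show ?thesis using C by simp
qed

lemma ilen_split:
  fixes a c :: "'x::{finite,order}"
  assumes "a \<le> c" "Suc i \<le> ilen a c"
  shows "\<exists>t. a < t \<and> t \<le> c \<and> i \<le> ilen t c"
proof -
  obtain C where C: "C \<subseteq> {a..c}" "C \<noteq> {}" "\<forall>p\<in>C. \<forall>q\<in>C. p \<le> q \<or> q \<le> p" "ilen a c = card C - 1"
    using ilen_att[OF assms(1)] by auto
  have fin: "finite C" by simp
  obtain m where m: "m \<in> C" "\<forall>b\<in>C. m \<le> b" using chain_least[OF fin C(2) C(3)] by auto
  have cC: "card C \<ge> Suc (Suc i)" using C(4) assms(2) by linarith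
  have cC': "card (C - {m}) = card C - 1" using m(1) fin by simp
  have ne: "C - {m} \<noteq> {}"
  proof
    assume "C - {m} = {}"
    then have "card (C - {m}) = 0" by simp
    then show False using cC cC' by linarith
  qed
  obtain t where t: "t \<in> C - {m}" "\<forall>b\<in>C - {m}. t \<le> b"
    using chain_least[of "C - {m}"] ne C(3) by auto
  have "m < t" 
  proof -
    have "t \<in> C" "t \<noteq> m" using t(1) by auto
    then show ?thesis using m(2) by (simp add: order.not_eq_order_implies_strict)
  qed
  moreover have "a \<le> m" using m C(1) by auto
  moreover have "t \<le> c" using t C(1) by auto
  moreover have "card (C - {m}) - 1 \<le> ilen t c"
    apply (rule ilen_ge) using t ne C by auto
  ultimately show ?thesis using cC cC' by (intro exI[of _ t]) auto
qed


lemma ebas_in: "(a::'x::{finite,order}) \<le> b \<Longrightarrow> (ebas a b :: 'x \<Rightarrow> 'x \<Rightarrow> 'k::field) \<in> incalg"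
  by (auto simp: incalg_def ebas_def)

lemma incalg_zero: "(0 :: 'x::{finite,order} \<Rightarrow> 'x \<Rightarrow> 'k::field) \<in> incalg"
  by (auto simp: incalg_def)

lemma incalg_add: "f \<in> incalg \<Longrightarrow> g \<in> incalg \<Longrightarrow> f + g \<in> incalg"
  by (auto simp: incalg_def)

lemma incalg_diff: "f \<in> incalg \<Longrightarrow> g \<in> incalg \<Longrightarrow> f - g \<in> incalg"
  by (auto simp: incalg_def)

lemma incalg_smult: "f \<in> incalg \<Longrightarrow> incsmult c f \<in> incalg"
  by (auto simp: incalg_def incsmult_def)

lemma incalg_sum: "(\<And>p. p \<in> P \<Longrightarrow> F p \<in> incalg) \<Longrightarrow> sum F P \<in> incalg"
  by (induction P rule: infinite_finite_induct) (auto intro: incalg_add incalg_zero)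

lemma incalg_mul: "f \<in> incalg \<Longrightarrow> g \<in> incalg \<Longrightarrow> incmul f g \<in> incalg"
  unfolding incalg_def
proof (intro CollectI allI impI)
  fix a b :: 'a
  assume "\<not> a \<le> b"
  then have "{t. a \<le> t \<and> t \<le> b} = {}" using order_trans by blast
  then show "incmul f g a b = 0" unfolding incmul_def by (simp only: sum.empty)
qed

lemma incalg_br: "f \<in> incalg \<Longrightarrow> g \<in> incalg \<Longrightarrow> lie_bracket f g \<in> incalg"
  unfolding lie_bracket_def by (intro incalg_diff incalg_mul)

lemma mul_ebas_left:
  fixes f :: "'x::{finite,order} \<Rightarrow> 'x \<Rightarrow> 'k::field"
  assumes "a \<le> b" "f \<in> incalg"
  shows "incmul (ebas a b) f = (\<lambda>c d. if c = a then f b d else 0)"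
proof (intro ext)
  fix c d
  have "incmul (ebas a b) f c d = (\<Sum>t\<in>{t. c \<le> t \<and> t \<le> d}. if c = a \<and> t = b then f b d else 0)"
    unfolding incmul_def ebas_def by (rule sum.cong) auto
  also have "\<dots> = (if c = a then f b d else 0)"
  proof (cases "c = a")
    case True
    have "(\<Sum>t\<in>{t. c \<le> t \<and> t \<le> d}. if c = a \<and> t = b then f b d else 0)
        = (\<Sum>t\<in>{t. c \<le> t \<and> t \<le> d}. if t = b then f b d else 0)" using True by simp
    also have "\<dots> = (if b \<in> {t. c \<le> t \<and> t \<le> d} then f b d else 0)"
      by simp
    also have "\<dots> = f b d" using True assms by (auto simp: incalg_def)
    finally show ?thesis using True by simp
  qed simp
  finally show "incmul (ebas a b) f c d = (if c = a then f b d else 0)" .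
qed

lemma mul_ebas_right:
  fixes f :: "'x::{finite,order} \<Rightarrow> 'x \<Rightarrow> 'k::field"
  assumes "a \<le> b" "f \<in> incalg"
  shows "incmul f (ebas a b) = (\<lambda>c d. if d = b then f c a else 0)"
proof (intro ext)
  fix c d
  have "incmul f (ebas a b) c d = (\<Sum>t\<in>{t. c \<le> t \<and> t \<le> d}. if d = b \<and> t = a then f c a else 0)"
    unfolding incmul_def ebas_def by (rule sum.cong) auto
  also have "\<dots> = (if d = b then f c a else 0)"
  proof (cases "d = b")
    case True
    have "(\<Sum>t\<in>{t. c \<le> t \<and> t \<le> d}. if d = b \<and> t = a then f c a else 0)
        = (\<Sum>t\<in>{t. c \<le> t \<and> t \<le> d}. if t = a then f c a else 0)" using True by simp
    also have "\<dots> = (if a \<in> {t. c \<le> t \<and> t \<le> d} then f c a else 0)"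
      by simp
    also have "\<dots> = f c a" using True assms by (auto simp: incalg_def)
    finally show ?thesis using True by simp
  qed simp
  finally show "incmul f (ebas a b) c d = (if d = b then f c a else 0)" .
qed

lemma mul_ebas_ebas:
  fixes a b c :: "'x::{finite,order}"
  assumes "a \<le> b" "b \<le> c"
  shows "incmul (ebas a b) (ebas b c) = (ebas a c :: 'x \<Rightarrow> 'x \<Rightarrow> 'k::field)"
  by (subst mul_ebas_left[OF assms(1) ebas_in[OF assms(2)]]) (auto simp: ebas_def fun_eq_iff)

lemma mul_ebas_ebas0:
  fixes a b c :: "'x::{finite,order}"
  assumes "b \<le> c" "a \<le> b" "a \<noteq> c"
  shows "incmul (ebas b c) (ebas a b) = (0 :: 'x \<Rightarrow> 'x \<Rightarrow> 'k::field)"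
  using assms by (subst mul_ebas_left[OF assms(1) ebas_in[OF assms(2)]]) (auto simp: ebas_def fun_eq_iff)

lemma br_ebas:
  fixes a t c :: "'x::{finite,order}"
  assumes "a \<le> t" "t \<le> c" "a \<noteq> c"
  shows "lie_bracket (ebas a t) (ebas t c) = (ebas a c :: 'x \<Rightarrow> 'x \<Rightarrow> 'k::field)"
  unfolding lie_bracket_def using assms by (simp add: mul_ebas_ebas mul_ebas_ebas0)

lemma br_entry:
  "lie_bracket f g a b = (\<Sum>t\<in>{t. a \<le> t \<and> t \<le> b}. f a t * g t b - g a t * f t b)"
  unfolding lie_bracket_def incmul_def by (simp add: sum_subtractf)

lemma decomp:
  fixes f :: "'x::{finite,order} \<Rightarrow> 'x \<Rightarrow> 'k::field"
  assumes "\<And>a b. f a b \<noteq> 0 \<Longrightarrow> H (a,b) = ebas a b"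
  shows "f = (\<Sum>p\<in>UNIV. incsmult (f (fst p) (snd p)) (H p))"
proof (intro ext)
  fix a b
  have "(\<Sum>p\<in>UNIV. incsmult (f (fst p) (snd p)) (H p)) a b
      = (\<Sum>p\<in>UNIV. f (fst p) (snd p) * H p a b)"
    by (simp add: sum_fun_apply2 incsmult_def)
  also have "\<dots> = (\<Sum>p\<in>UNIV. if p = (a,b) then f a b else 0)"
  proof (rule sum.cong)
    fix p :: "'x \<times> 'x"
    obtain c d where p: "p = (c,d)" by fastforce
    show "f (fst p) (snd p) * H p a b = (if p = (a,b) then f a b else 0)"
      using assms[of c d] p by (cases "f c d = 0") (auto simp: ebas_def)
  qed simp
  also have "\<dots> = f a b" by simp
  finally show "f a b = (\<Sum>p\<in>UNIV. incsmult (f (fst p) (snd p)) (H p)) a b" by simp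
qed

lemma sum_in_closed:
  assumes "0 \<in> S" "\<And>f g. f \<in> S \<Longrightarrow> g \<in> S \<Longrightarrow> f + g \<in> S"
    "\<And>c f. f \<in> S \<Longrightarrow> incsmult c f \<in> S"
    "\<And>p. p \<in> P \<Longrightarrow> G p \<in> S"
  shows "(\<Sum>p\<in>P. incsmult (c p) (G p)) \<in> S"
  using assms(4)
  by (induction P rule: infinite_finite_induct) (auto intro: assms(1,2,3))

lemma Jsp_zero: "0 \<in> Jsp i" by (auto simp: Jsp_def incalg_zero)
lemma Jsp_add: "f \<in> Jsp i \<Longrightarrow> g \<in> Jsp i \<Longrightarrow> f + g \<in> Jsp i"
  by (auto simp: Jsp_def incalg_add) (metis add.right_neutral)
lemma Jsp_smult: "f \<in> Jsp i \<Longrightarrow> incsmult c f \<in> Jsp i"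
  using incalg_smult[of f c] by (auto simp: Jsp_def incsmult_def)
lemma Jsp_incalg: "f \<in> Jsp i \<Longrightarrow> f \<in> incalg" by (simp add: Jsp_def)

lemma Jsp_diag:
  fixes f :: "'x::{finite,order} \<Rightarrow> 'x \<Rightarrow> 'k::field"
  shows "f \<in> Jsp 1 \<Longrightarrow> f t t = 0"
  using ilen_refl[of t] unfolding Jsp_def by (metis (mono_tags, lifting) mem_Collect_eq not_one_le_zero)

lemma br_J1:
  fixes f :: "'x::{finite,order} \<Rightarrow> 'x \<Rightarrow> 'k::field"
  assumes "f \<in> incalg" "g \<in> incalg"
  shows "lie_bracket f g \<in> Jsp 1"
proof -
  have "1 \<le> ilen a b" if nz: "lie_bracket f g a b \<noteq> 0" for a b
  proof -
    have ab: "a \<le> b" using incalg_br[OF assms] nz by (auto simp: incalg_def)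
    have "a \<noteq> b"
    proof
      assume "a = b"
      then have "{t. a \<le> t \<and> t \<le> b} = {a}" by auto
      then have "lie_bracket f g a b = 0" using \<open>a = b\<close> by (simp add: br_entry)
      then show False using nz by simp
    qed
    then show ?thesis using ab ilen_lt[of a b] by (simp add: order.strict_iff_order)
  qed
  then show ?thesis using incalg_br[OF assms] by (auto simp: Jsp_def)
qed

lemma br_Jsuc:
  fixes f :: "'x::{finite,order} \<Rightarrow> 'x \<Rightarrow> 'k::field"
  assumes "f \<in> Jsp 1" "g \<in> Jsp i"
  shows "lie_bracket f g \<in> Jsp (Suc i)"
proof -
  have fi: "f \<in> incalg" "g \<in> incalg" using assms by (auto simp: Jsp_def)
  have "Suc i \<le> ilen a b" if nz: "lie_bracket f g a b \<noteq> 0" for a b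
  proof -
    obtain t where t: "a \<le> t" "t \<le> b" "f a t * g t b - g a t * f t b \<noteq> 0"
      using nz unfolding br_entry by (metis (no_types, lifting) mem_Collect_eq sum.neutral)
    show ?thesis
    proof (cases "f a t * g t b = 0")
      case False
      then have "f a t \<noteq> 0" "g t b \<noteq> 0" by auto
      then have "a \<noteq> t" "i \<le> ilen t b" using assms Jsp_diag[of f a] by (auto simp: Jsp_def)
      then have "a < t" using t by auto
      then show ?thesis using ilen_left[of a t b] t \<open>i \<le> ilen t b\<close> by linarith
    next
      case True
      then have "g a t \<noteq> 0" "f t b \<noteq> 0" using t by auto
      then have "t \<noteq> b" "i \<le> ilen a t" using assms Jsp_diag[of f b] by (auto simp: Jsp_def)
      then have "t < b" using t by auto
      then show ?thesis using ilen_right[of a t b] t \<open>i \<le> ilen a t\<close> by linarith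
    qed
  qed
  then show ?thesis using incalg_br[OF fi] by (auto simp: Jsp_def)
qed


definition Iup :: "'x::{finite,order} \<Rightarrow> 'x \<Rightarrow> ('x \<Rightarrow> 'x \<Rightarrow> 'k::field) set" where
  "Iup x y = {f \<in> incalg. \<forall>a b. f a b \<noteq> 0 \<longrightarrow> a \<le> x \<and> y \<le> b}"

lemma Iup_br:
  assumes "s \<in> incalg" "f \<in> Iup x y"
  shows "lie_bracket s f \<in> Iup x y"
proof -
  have fi: "f \<in> incalg" using assms by (simp add: Iup_def)
  have "a \<le> x \<and> y \<le> b" if nz: "lie_bracket s f a b \<noteq> 0" for a b
  proof -
    obtain t where t: "a \<le> t" "t \<le> b" "s a t * f t b - f a t * s t b \<noteq> 0"
      using nz unfolding br_entry by (metis (no_types, lifting) mem_Collect_eq sum.neutral)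
    show ?thesis
    proof (cases "f t b = 0")
      case False
      then show ?thesis using assms(2) t unfolding Iup_def by (auto intro: order_trans)
    next
      case True
      then have "f a t \<noteq> 0" using t by auto
      then show ?thesis using assms(2) t unfolding Iup_def by (auto intro: order_trans)
    qed
  qed
  then show ?thesis using incalg_br[OF assms(1) fi] by (auto simp: Iup_def)
qed

lemma Iup_smult: "f \<in> Iup x y \<Longrightarrow> incsmult c f \<in> Iup x y"
  using incalg_smult[of f c] by (auto simp: Iup_def incsmult_def)

lemma Iup_incalg: "f \<in> Iup x y \<Longrightarrow> f \<in> incalg" by (simp add: Iup_def)

lemma Iup_J:
  assumes "x \<le> y" "f \<in> Iup x y"
  shows "f \<in> Jsp (ilen x y)"
  using assms ilen_mono[of _ x y] unfolding Iup_def Jsp_def by auto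

lemma ebas_Iup: "a \<le> x \<Longrightarrow> y \<le> b \<Longrightarrow> a \<le> b \<Longrightarrow> ebas a b \<in> Iup x y"
  using ebas_in[of a b] by (auto simp: Iup_def ebas_def)

lemma smult_smult: "incsmult a (incsmult b f) = incsmult (a * b) f"
  by (simp add: incsmult_def mult.assoc)

lemma smult_one: "incsmult 1 f = f"
  by (simp add: incsmult_def)

context
  fixes \<phi> :: "('x::{finite,order} \<Rightarrow> 'x \<Rightarrow> 'k::field) \<Rightarrow> ('x \<Rightarrow> 'x \<Rightarrow> 'k)"
  assumes LA: "lie_automorphism \<phi>"
begin

lemma phi_in: "f \<in> incalg \<Longrightarrow> \<phi> f \<in> incalg"
  using LA unfolding lie_automorphism_def bij_betw_def by auto

lemma phi_surj: "r \<in> incalg \<Longrightarrow> \<exists>s\<in>incalg. \<phi> s = r"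
  using LA unfolding lie_automorphism_def bij_betw_def by (metis imageE)

lemma phi_add: "f \<in> incalg \<Longrightarrow> g \<in> incalg \<Longrightarrow> \<phi> (f + g) = \<phi> f + \<phi> g"
  using LA unfolding lie_automorphism_def by auto

lemma phi_smult: "f \<in> incalg \<Longrightarrow> \<phi> (incsmult c f) = incsmult c (\<phi> f)"
  using LA unfolding lie_automorphism_def by auto

lemma phi_br: "f \<in> incalg \<Longrightarrow> g \<in> incalg \<Longrightarrow> \<phi> (lie_bracket f g) = lie_bracket (\<phi> f) (\<phi> g)"
  using LA unfolding lie_automorphism_def by auto

lemma phi_zero: "\<phi> 0 = 0"
  using phi_add[OF incalg_zero incalg_zero] by simp

lemma phi_sum: "(\<And>p. p \<in> P \<Longrightarrow> F p \<in> incalg) \<Longrightarrow> \<phi> (sum F P) = (\<Sum>p\<in>P. \<phi> (F p))"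
proof (induction P rule: infinite_finite_induct)
  case (insert p P)
  have "\<phi> (sum F (insert p P)) = \<phi> (F p + sum F P)" by (simp only: sum.insert[OF insert.hyps])
  also have "\<dots> = \<phi> (F p) + \<phi> (sum F P)"
    by (rule phi_add) (use insert.prems in \<open>auto intro: incalg_sum\<close>)
  also have "\<dots> = \<phi> (F p) + (\<Sum>p\<in>P. \<phi> (F p))" using insert.IH insert.prems by simp
  also have "\<dots> = (\<Sum>p\<in>insert p P. \<phi> (F p))" by (simp only: sum.insert[OF insert.hyps])
  finally show ?case .
qed (auto simp: phi_zero)

lemma phi_decomp:
  assumes "\<And>a b. f a b \<noteq> 0 \<Longrightarrow> H (a,b) = ebas a b" "\<And>p. H p \<in> incalg"
  shows "\<phi> f = (\<Sum>p\<in>UNIV. incsmult (f (fst p) (snd p)) (\<phi> (H p)))"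
proof -
  have e: "f = (\<Sum>p\<in>UNIV. incsmult (f (fst p) (snd p)) (H p))" using decomp[of f H] assms(1) by blast
  have "\<phi> f = \<phi> (\<Sum>p\<in>UNIV. incsmult (f (fst p) (snd p)) (H p))" by (rule arg_cong[where f=\<phi>]) (rule e)
  also have "\<dots> = (\<Sum>p\<in>UNIV. \<phi> (incsmult (f (fst p) (snd p)) (H p)))"
    by (rule phi_sum) (use assms(2) in \<open>auto intro: incalg_smult\<close>)
  also have "\<dots> = (\<Sum>p\<in>UNIV. incsmult (f (fst p) (snd p)) (\<phi> (H p)))"
    using assms(2) by (simp add: phi_smult)
  finally show ?thesis .
qed

lemma Jinv_step:
  assumes hyp: "\<And>a t c. a < t \<Longrightarrow> t \<le> c \<Longrightarrow> i \<le> ilen t c \<Longrightarrow>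
      lie_bracket (\<phi> (ebas a t)) (\<phi> (ebas t c)) \<in> Jsp (Suc i)"
    and f: "f \<in> Jsp (Suc i)"
  shows "\<phi> f \<in> Jsp (Suc i)"
proof -
  define T where "T (a::'x) c = (SOME t. a < t \<and> t \<le> c \<and> i \<le> ilen t c)" for a c
  define H :: "'x \<times> 'x \<Rightarrow> 'x \<Rightarrow> 'x \<Rightarrow> 'k" where "H p = (if f (fst p) (snd p) \<noteq> 0 then
      lie_bracket (ebas (fst p) (T (fst p) (snd p))) (ebas (T (fst p) (snd p)) (snd p)) else 0)" for p
  have Tp: "fst p < T (fst p) (snd p) \<and> T (fst p) (snd p) \<le> snd p \<and> i \<le> ilen (T (fst p) (snd p)) (snd p)"
    if "f (fst p) (snd p) \<noteq> 0" for p
  proof -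
    have "fst p \<le> snd p" "Suc i \<le> ilen (fst p) (snd p)" using f that by (auto simp: Jsp_def incalg_def)
    from ilen_split[OF this] show ?thesis unfolding T_def by (rule someI_ex)
  qed
  have H1: "H (a,b) = ebas a b" if "f a b \<noteq> 0" for a b
    using Tp[of "(a,b)"] that unfolding H_def by (auto intro!: br_ebas)
  have H2: "H p \<in> incalg" for p
    using Tp[of p] unfolding H_def by (auto intro!: incalg_br ebas_in incalg_zero)
  have "\<phi> f = (\<Sum>p\<in>UNIV. incsmult (f (fst p) (snd p)) (\<phi> (H p)))"
    by (rule phi_decomp[OF H1 H2])
  also have "\<dots> \<in> Jsp (Suc i)"
  proof (rule sum_in_closed[OF Jsp_zero Jsp_add Jsp_smult])
    fix p :: "'x \<times> 'x"
    show "\<phi> (H p) \<in> Jsp (Suc i)"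
    proof (cases "f (fst p) (snd p) \<noteq> 0")
      case True
      then have "\<phi> (H p) = lie_bracket (\<phi> (ebas (fst p) (T (fst p) (snd p)))) (\<phi> (ebas (T (fst p) (snd p)) (snd p)))"
        using Tp[of p] unfolding H_def by (auto simp: phi_br ebas_in)
      then show ?thesis using Tp[of p] True hyp by auto
    next
      case False
      then show ?thesis unfolding H_def by (simp add: phi_zero Jsp_zero)
    qed
  qed
  finally show ?thesis .
qed

lemma Jinv1: "f \<in> Jsp 1 \<Longrightarrow> \<phi> f \<in> Jsp 1"
  using Jinv_step[of 0 f] br_J1 phi_in ebas_in
  by (metis One_nat_def less_imp_le)

lemma Jinv: "f \<in> Jsp i \<Longrightarrow> \<phi> f \<in> Jsp i"
proof (induction i arbitrary: f)
  case 0
  then show ?case by (simp add: Jsp_def phi_in)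
next
  case (Suc i)
  show ?case
  proof (rule Jinv_step[OF _ Suc.prems])
    fix a t c :: 'x
    assume "a < t" "t \<le> c" "i \<le> ilen t c"
    have "ebas a t \<in> Jsp 1"
      using ilen_lt[OF \<open>a < t\<close>] ebas_in[OF less_imp_le[OF \<open>a < t\<close>]] by (auto simp: Jsp_def ebas_def)
    moreover have "ebas t c \<in> Jsp i"
      using \<open>i \<le> ilen t c\<close> ebas_in[OF \<open>t \<le> c\<close>] by (auto simp: Jsp_def ebas_def)
    ultimately show "lie_bracket (\<phi> (ebas a t)) (\<phi> (ebas t c)) \<in> Jsp (Suc i)"
      using Jinv1 Suc.IH br_Jsuc by blast
  qed
qed


lemma A_br: "r \<in> incalg \<Longrightarrow> \<alpha> \<in> \<phi> ` Iup x y \<Longrightarrow> lie_bracket r \<alpha> \<in> \<phi> ` Iup x y"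
proof -
  assume r: "r \<in> incalg" and a: "\<alpha> \<in> \<phi> ` Iup x y"
  obtain f where f: "f \<in> Iup x y" "\<alpha> = \<phi> f" using a by auto
  obtain s where s: "s \<in> incalg" "\<phi> s = r" using phi_surj[OF r] by auto
  have "lie_bracket r \<alpha> = \<phi> (lie_bracket s f)" using s f Iup_incalg phi_br by metis
  then show ?thesis using Iup_br[OF s(1) f(1)] by auto
qed

lemma A_smult: "\<alpha> \<in> \<phi> ` Iup x y \<Longrightarrow> incsmult c \<alpha> \<in> \<phi> ` Iup x y"
proof -
  assume a: "\<alpha> \<in> \<phi> ` Iup x y"
  obtain f where f: "f \<in> Iup x y" "\<alpha> = \<phi> f" using a by auto
  then have "incsmult c \<alpha> = \<phi> (incsmult c f)" using phi_smult Iup_incalg by metis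
  then show ?thesis using Iup_smult[OF f(1)] by auto
qed

lemma A_incalg: "\<alpha> \<in> \<phi> ` Iup x y \<Longrightarrow> \<alpha> \<in> incalg"
  using phi_in Iup_incalg by auto

lemma A_unit:
  assumes a: "\<alpha> \<in> \<phi> ` Iup x y" and nz: "\<alpha> c d \<noteq> 0" and cd: "c \<noteq> d"
  shows "ebas c d \<in> \<phi> ` Iup x y"
proof -
  have ai: "\<alpha> \<in> incalg" using A_incalg[OF a] .
  have "c \<le> d" using ai nz by (auto simp: incalg_def)
  then have "\<not> d \<le> c" using cd by auto
  then have adc: "\<alpha> d c = 0" using ai by (auto simp: incalg_def)
  define \<beta> where "\<beta> = lie_bracket (ebas c c) \<alpha>"
  have bi: "\<beta> \<in> incalg" unfolding \<beta>_def by (intro incalg_br ebas_in ai) simp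
  have b: "\<beta> = (\<lambda>p q. if p = c then \<alpha> c q else 0) - (\<lambda>p q. if q = c then \<alpha> p c else 0)"
    unfolding \<beta>_def lie_bracket_def by (simp add: mul_ebas_left mul_ebas_right ai)
  have "lie_bracket (ebas d d) \<beta> = (\<lambda>p q. if p = d then \<beta> d q else 0) - (\<lambda>p q. if q = d then \<beta> p d else 0)"
    unfolding lie_bracket_def by (simp add: mul_ebas_left mul_ebas_right bi)
  also have "\<dots> = incsmult (- \<alpha> c d) (ebas c d)"
    unfolding b using cd adc by (auto simp: fun_eq_iff incsmult_def ebas_def)
  finally have g: "lie_bracket (ebas d d) \<beta> = incsmult (- \<alpha> c d) (ebas c d)" .
  have "lie_bracket (ebas d d) \<beta> \<in> \<phi> ` Iup x y"
    unfolding \<beta>_def by (intro A_br ebas_in a order_refl)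
  then have "incsmult (- 1 / \<alpha> c d) (lie_bracket (ebas d d) \<beta>) \<in> \<phi> ` Iup x y" by (rule A_smult)
  also have "incsmult (- 1 / \<alpha> c d) (lie_bracket (ebas d d) \<beta>) = ebas c d"
    unfolding g smult_smult using nz by (simp add: smult_one)
  finally show ?thesis .
qed

lemma br_min:
  assumes j: "j \<in> Jsp 1" and a: "\<alpha> \<in> \<phi> ` Iup x y"
    and M: "\<forall>\<alpha>\<in>\<phi> ` Iup x y. \<forall>t. (m1 < t \<longrightarrow> \<alpha> t m2 = 0) \<and> (t < m2 \<longrightarrow> \<alpha> m1 t = 0)"
  shows "lie_bracket j \<alpha> m1 m2 = 0 \<and> lie_bracket \<alpha> j m1 m2 = 0"
proof -
  have z1: "j m1 t * \<alpha> t m2 = 0" if "m1 \<le> t" for t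
  proof (cases "t = m1")
    case True then show ?thesis using Jsp_diag[OF j] by simp
  next
    case False then have "m1 < t" using that by auto
    then show ?thesis using M a by auto
  qed
  have z2: "\<alpha> m1 t * j t m2 = 0" if "t \<le> m2" for t
  proof (cases "t = m2")
    case True then show ?thesis using Jsp_diag[OF j] by simp
  next
    case False then have "t < m2" using that by auto
    then show ?thesis using M a by auto
  qed
  have "\<forall>t\<in>{t. m1 \<le> t \<and> t \<le> m2}. j m1 t * \<alpha> t m2 - \<alpha> m1 t * j t m2 = 0"
  proof
    fix t assume "t \<in> {t. m1 \<le> t \<and> t \<le> m2}"
    then have "m1 \<le> t" "t \<le> m2" by auto
    then have e1: "j m1 t * \<alpha> t m2 = 0" "\<alpha> m1 t * j t m2 = 0" using z1 z2 by blast+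
    show "j m1 t * \<alpha> t m2 - \<alpha> m1 t * j t m2 = 0" by (simp only: e1 diff_self)
  qed
  moreover have "\<forall>t\<in>{t. m1 \<le> t \<and> t \<le> m2}. \<alpha> m1 t * j t m2 - j m1 t * \<alpha> t m2 = 0"
  proof
    fix t assume "t \<in> {t. m1 \<le> t \<and> t \<le> m2}"
    then have "m1 \<le> t" "t \<le> m2" by auto
    then have e1: "j m1 t * \<alpha> t m2 = 0" "\<alpha> m1 t * j t m2 = 0" using z1 z2 by blast+
    show "\<alpha> m1 t * j t m2 - j m1 t * \<alpha> t m2 = 0" by (simp only: e1 diff_self)
  qed
  ultimately show ?thesis unfolding br_entry by (simp only: sum.neutral)
qed

lemma value_min:
  assumes xy: "x < y"
    and M: "\<forall>\<alpha>\<in>\<phi> ` Iup x y. \<forall>t. (m1 < t \<longrightarrow> \<alpha> t m2 = 0) \<and> (t < m2 \<longrightarrow> \<alpha> m1 t = 0)"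
    and f: "f \<in> Iup x y"
  shows "\<phi> f m1 m2 = f x y * \<phi> (ebas x y) m1 m2"
proof -
  define H :: "'x \<times> 'x \<Rightarrow> 'x \<Rightarrow> 'x \<Rightarrow> 'k" where "H p = (if f (fst p) (snd p) \<noteq> 0 then
      (if p = (x,y) then ebas x y else if fst p \<noteq> x then lie_bracket (ebas (fst p) x) (ebas x (snd p))
       else lie_bracket (ebas x y) (ebas y (snd p))) else 0)" for p
  have fp: "fst p \<le> x \<and> y \<le> snd p" if "f (fst p) (snd p) \<noteq> 0" for p
    using f that by (auto simp: Iup_def)
  have H1: "H (a,b) = ebas a b" if "f a b \<noteq> 0" for a b
  proof -
    have ab: "a \<le> x" "y \<le> b" using fp[of "(a,b)"] that by auto
    show ?thesis
    proof (cases "(a,b) = (x,y)")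
      case True then show ?thesis using that unfolding H_def by auto
    next
      case False
      show ?thesis
      proof (cases "a = x")
        case True
        then have "y \<noteq> b" using False by auto
        then show ?thesis using that True ab xy unfolding H_def
          by (auto intro!: br_ebas)
      next
        case a: False
        then show ?thesis using that ab xy unfolding H_def
          by (auto intro!: br_ebas dest: order.strict_trans1 order.strict_trans2)
      qed
    qed
  qed
  have H2: "H p \<in> incalg" for p
    using fp[of p] xy unfolding H_def
    by (auto intro!: incalg_br ebas_in incalg_zero intro: order_trans less_imp_le)
  have "\<phi> f m1 m2 = (\<Sum>p\<in>UNIV. incsmult (f (fst p) (snd p)) (\<phi> (H p))) m1 m2"
    by (rule fun_cong[OF fun_cong[OF phi_decomp[OF H1 H2]]])
  also have "\<dots> = (\<Sum>p\<in>UNIV. f (fst p) (snd p) * \<phi> (H p) m1 m2)"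
    by (simp add: sum_fun_apply2 incsmult_def)
  also have "\<dots> = (\<Sum>p\<in>UNIV. if p = (x,y) then f x y * \<phi> (ebas x y) m1 m2 else 0)"
  proof (rule sum.cong)
    fix p :: "'x \<times> 'x"
    obtain c d where p: "p = (c,d)" by fastforce
    show "f (fst p) (snd p) * \<phi> (H p) m1 m2 = (if p = (x,y) then f x y * \<phi> (ebas x y) m1 m2 else 0)"
    proof (cases "f c d = 0")
      case True then show ?thesis using p by auto
    next
      case False
      have cd: "c \<le> x" "y \<le> d" using fp[of p] False p by auto
      show ?thesis
      proof (cases "p = (x,y)")
        case True then show ?thesis using False p unfolding H_def by auto
      next
        case np: False
        show ?thesis
        proof (cases "c = x")
          case True
          have yd: "y < d" using np True p cd by auto
          have "\<phi> (H p) = lie_bracket (\<phi> (ebas x y)) (\<phi> (ebas y d))"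
            using False np True p xy yd unfolding H_def by (auto simp: phi_br ebas_in)
          moreover have "\<phi> (ebas y d) \<in> Jsp 1"
            by (rule Jinv1) (use ilen_lt[OF yd] ebas_in[OF less_imp_le[OF yd]] in \<open>auto simp: Jsp_def ebas_def\<close>)
          moreover have "\<phi> (ebas x y) \<in> \<phi> ` Iup x y"
            by (intro imageI ebas_Iup) (use xy in auto)
          ultimately show ?thesis using br_min[OF _ _ M] np by auto
        next
          case cx: False
          have cx': "c < x" using cx cd by auto
          have xd: "x \<le> d" using xy cd by auto
          have "\<phi> (H p) = lie_bracket (\<phi> (ebas c x)) (\<phi> (ebas x d))"
            using False np cx p cx' xd unfolding H_def by (auto simp: phi_br ebas_in)
          moreover have "\<phi> (ebas c x) \<in> Jsp 1"
            by (rule Jinv1) (use ilen_lt[OF cx'] ebas_in[OF less_imp_le[OF cx']] in \<open>auto simp: Jsp_def ebas_def\<close>)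
          moreover have "\<phi> (ebas x d) \<in> \<phi> ` Iup x y"
            using ebas_Iup[of x x y d] xd cd by auto
          ultimately show ?thesis using br_min[OF _ _ M] np by auto
        qed
      qed
    qed
  qed simp
  also have "\<dots> = f x y * \<phi> (ebas x y) m1 m2" by simp
  finally show ?thesis .
qed

end


theorem lemma4p4:
  fixes \<phi> :: "('x::{finite,order} \<Rightarrow> 'x \<Rightarrow> 'k::field) \<Rightarrow> ('x \<Rightarrow> 'x \<Rightarrow> 'k)"
    and x y u v :: 'x and i :: nat and k :: 'k
  assumes "connected_poset TYPE('x)"
    and "lie_automorphism \<phi>"
    and "x \<le> y" and "ilen x y = i" and "i > 0"
    and "u < v" and "k \<noteq> 0"
    and "Lcomp i (\<phi> (ebas x y)) = incsmult k (ebas u v)"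
  shows "\<phi> (ebas x y) - Lcomp i (\<phi> (ebas x y)) \<in> ideal_gen (ebas u v) \<inter> Jsp (i + 1)"
proof -
  note LA = assms(2)
  define g where "g = \<phi> (ebas x y)"
  define A where "A = \<phi> ` Iup x y"
  have xy: "x < y"
  proof -
    have "x \<noteq> y" using assms(4,5) ilen_refl[of x] by auto
    then show ?thesis using assms(3) by auto
  qed
  have L8: "Lcomp i g u v = k"
    using fun_cong[OF fun_cong[OF assms(8)], of u v] by (simp add: g_def incsmult_def ebas_def)
  have uvi: "ilen u v = i" and guv: "g u v = k"
    using L8 assms(7) by (auto simp: Lcomp_def split: if_splits)
  have gA: "g \<in> A" unfolding g_def A_def by (intro imageI ebas_Iup) (use xy in auto)
  have AJ: "\<alpha> \<in> Jsp i" if "\<alpha> \<in> A" for \<alpha>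
    using that Jinv[OF LA Iup_J[OF assms(3)]] assms(4) unfolding A_def by auto
  have Ainc: "\<alpha> \<in> incalg" if "\<alpha> \<in> A" for \<alpha>
    using AJ[OF that] by (rule Jsp_incalg)
  have key: "\<forall>c d. g c d \<noteq> 0 \<longrightarrow> c \<le> u \<and> v \<le> d"
  proof (rule ccontr)
    assume "\<not> (\<forall>c d. g c d \<noteq> 0 \<longrightarrow> c \<le> u \<and> v \<le> d)"
    then obtain c0 d0 where cd0: "g c0 d0 \<noteq> 0" "\<not> (c0 \<le> u \<and> v \<le> d0)" by auto
    define Q where "Q = {p. (\<exists>\<alpha>\<in>A. \<alpha> (fst p) (snd p) \<noteq> 0) \<and> \<not> (fst p \<le> u \<and> v \<le> snd p)}"
    define len where "len p = ilen (fst p) (snd p)" for p :: "'x \<times> 'x"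
    have "(c0,d0) \<in> Q" using cd0 gA unfolding Q_def by auto
    define pm where "pm = arg_min len (\<lambda>p. p \<in> Q)"
    have pm: "pm \<in> Q" "\<forall>q. q \<in> Q \<longrightarrow> len pm \<le> len q"
      using arg_min_nat_lemma[of "\<lambda>p. p \<in> Q" "(c0,d0)" len, OF \<open>(c0,d0) \<in> Q\<close>]
      unfolding pm_def by auto
    obtain c d where cd: "pm = (c,d)" by fastforce
    obtain \<alpha>0 where a0: "\<alpha>0 \<in> A" "\<alpha>0 c d \<noteq> 0" using pm(1) cd unfolding Q_def by auto
    have ncd: "\<not> (c \<le> u \<and> v \<le> d)" using pm(1) cd unfolding Q_def by auto
    have "c \<noteq> d"
    proof
      assume "c = d"
      then have "ilen c d = 0" using ilen_refl by simp
      moreover have "i \<le> ilen c d" using AJ[OF a0(1)] a0(2) by (auto simp: Jsp_def)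
      ultimately show False using assms(5) by simp
    qed
    have Mcd: "\<forall>\<alpha>\<in>\<phi> ` Iup x y. \<forall>t. (c < t \<longrightarrow> \<alpha> t d = 0) \<and> (t < d \<longrightarrow> \<alpha> c t = 0)"
    proof (intro ballI allI conjI impI)
      fix \<alpha> t assume aA: "\<alpha> \<in> \<phi> ` Iup x y"
      then have aA': "\<alpha> \<in> A" by (simp add: A_def)
      {
        assume ct: "c < t"
        show "\<alpha> t d = 0"
        proof (rule ccontr)
          assume nz: "\<alpha> t d \<noteq> 0"
          then have td: "t \<le> d" using Ainc[OF aA'] by (auto simp: incalg_def)
          have "\<not> (t \<le> u \<and> v \<le> d)" using ncd ct by (auto dest: order.strict_trans1 intro: less_imp_le)
          then have "(t,d) \<in> Q" using nz aA' unfolding Q_def by auto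
          then have "ilen c d \<le> ilen t d" using pm(2) cd unfolding len_def by force
          then show False using ilen_left[OF ct td] by linarith
        qed
      }
      {
        assume tlt: "t < d"
        show "\<alpha> c t = 0"
        proof (rule ccontr)
          assume nz: "\<alpha> c t \<noteq> 0"
          then have ct: "c \<le> t" using Ainc[OF aA'] by (auto simp: incalg_def)
          have "\<not> (c \<le> u \<and> v \<le> t)" using ncd tlt by (auto dest: order.strict_trans1 intro: less_imp_le)
          then have "(c,t) \<in> Q" using nz aA' unfolding Q_def by auto
          then have "ilen c d \<le> ilen c t" using pm(2) cd unfolding len_def by force
          then show False using ilen_right[OF ct tlt] by linarith
        qed
      }
    qed
    have Muv: "\<forall>\<alpha>\<in>\<phi> ` Iup x y. \<forall>t. (u < t \<longrightarrow> \<alpha> t v = 0) \<and> (t < v \<longrightarrow> \<alpha> u t = 0)"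
    proof (intro ballI allI conjI impI)
      fix \<alpha> t assume aA: "\<alpha> \<in> \<phi> ` Iup x y"
      then have aA': "\<alpha> \<in> A" by (simp add: A_def)
      {
        assume ut: "u < t"
        show "\<alpha> t v = 0"
        proof (rule ccontr)
          assume nz: "\<alpha> t v \<noteq> 0"
          then have tv: "t \<le> v" "i \<le> ilen t v" using AJ[OF aA'] by (auto simp: Jsp_def incalg_def)
          then show False using ilen_left[OF ut tv(1)] uvi by linarith
        qed
      }
      {
        assume tv: "t < v"
        show "\<alpha> u t = 0"
        proof (rule ccontr)
          assume nz: "\<alpha> u t \<noteq> 0"
          then have ut: "u \<le> t" "i \<le> ilen u t" using AJ[OF aA'] by (auto simp: Jsp_def incalg_def)
          then show False using ilen_right[OF ut(1) tv] uvi by linarith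
        qed
      }
    qed
    have "ebas c d \<in> \<phi> ` Iup x y"
      using A_unit[OF LA, of \<alpha>0 x y c d] a0 \<open>c \<noteq> d\<close> unfolding A_def by blast
    then obtain f where f: "f \<in> Iup x y" "\<phi> f = ebas c d" by auto
    have "\<phi> f u v = f x y * g u v" unfolding g_def by (rule value_min[OF LA xy Muv f(1)])
    moreover have "ebas c d u v = (0::'k)" using ncd by (auto simp: ebas_def)
    ultimately have "f x y = 0" using guv assms(7) f(2) by simp
    moreover have "\<phi> f c d = f x y * g c d" unfolding g_def by (rule value_min[OF LA xy Mcd f(1)])
    ultimately show False using f(2) by (simp add: ebas_def)
  qed
  have gJ: "g \<in> Jsp i" using AJ[OF gA] .
  have gi: "g \<in> incalg" using gJ by (rule Jsp_incalg)
  have Li: "Lcomp i g \<in> incalg" by (auto simp: Lcomp_def incalg_def)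
  define h where "h = g - Lcomp i g"
  have hi: "h \<in> incalg" unfolding h_def by (rule incalg_diff[OF gi Li])
  have hg: "h a b \<noteq> 0 \<Longrightarrow> g a b \<noteq> 0 \<and> \<not> (a \<le> b \<and> ilen a b = i)" for a b
    unfolding h_def by (auto simp: Lcomp_def split: if_splits)
  have hJ: "h \<in> Jsp (i + 1)"
  proof -
    have "i + 1 \<le> ilen a b" if "h a b \<noteq> 0" for a b
    proof -
      have "g a b \<noteq> 0" "\<not> (a \<le> b \<and> ilen a b = i)" using hg[OF that] by auto
      moreover have "a \<le> b" "i \<le> ilen a b" using gJ \<open>g a b \<noteq> 0\<close> by (auto simp: Jsp_def incalg_def)
      ultimately show ?thesis by auto
    qed
    then show ?thesis using hi by (auto simp: Jsp_def)
  qed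
  have hI: "h \<in> ideal_gen (ebas u v)"
    unfolding ideal_gen_def
  proof (rule InterI)
    fix S :: "('x \<Rightarrow> 'x \<Rightarrow> 'k) set" assume "S \<in> {S. is_ideal S \<and> ebas u v \<in> S}"
    then have S: "is_ideal S" "ebas u v \<in> S" by auto
    define H :: "'x \<times> 'x \<Rightarrow> 'x \<Rightarrow> 'x \<Rightarrow> 'k" where
      "H p = (if h (fst p) (snd p) \<noteq> 0 then ebas (fst p) (snd p) else 0)" for p
    have e: "h = (\<Sum>p\<in>UNIV. incsmult (h (fst p) (snd p)) (H p))"
      by (rule decomp) (simp add: H_def)
    have HS: "H p \<in> S" for p
    proof (cases "h (fst p) (snd p) \<noteq> 0")
      case True
      obtain a b where p: "p = (a,b)" by fastforce
      have "a \<le> u" "v \<le> b" using key hg True p by auto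
      have uv: "u \<le> v" using assms(6) by simp
      have "(ebas a b :: 'x \<Rightarrow> 'x \<Rightarrow> 'k) = incmul (incmul (ebas a u) (ebas u v)) (ebas v b)"
        using mul_ebas_ebas[OF \<open>a \<le> u\<close> uv, where 'k='k] mul_ebas_ebas[OF order_trans[OF \<open>a \<le> u\<close> uv] \<open>v \<le> b\<close>, where 'k='k] by simp
      moreover have "incmul (ebas a u) (ebas u v) \<in> S"
        using S ebas_in[OF \<open>a \<le> u\<close>] unfolding is_ideal_def by blast
      ultimately have "ebas a b \<in> S"
        using S ebas_in[OF \<open>v \<le> b\<close>] unfolding is_ideal_def by metis
      then show ?thesis using True p unfolding H_def by simp
    next
      case False
      then show ?thesis using S unfolding H_def is_ideal_def by simp
    qed
    have "(\<Sum>p\<in>UNIV. incsmult (h (fst p) (snd p)) (H p)) \<in> S"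
      by (rule sum_in_closed) (use S HS in \<open>auto simp: is_ideal_def\<close>)
    then show "h \<in> S" using e by simp
  qed
  show ?thesis using hI hJ unfolding h_def g_def by simp
qed

end
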